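(* For each notion of guarding $\mathfrak{g}$ and $\sigma$-structures $\mathcal{A}, \mathcal{B}$, there is a bijective correspondence between (1) coKleisli morphisms, i.e. $\sigma$-homomorphisms, $\mathbb{G}^{\mathfrak{g}} \mathcal{A} \to \mathcal{B}$, and (2) winning strategies for Duplicator in the $\mathfrak{g}$-guarded simulation game from $\mathcal{A}$ to $\mathcal{B}$. Thus $\mathcal{A} \preceq^{\mathfrak{g}} \mathcal{B}$ iff there is a homomorphism $\mathbb{G}^{\mathfrak{g}} \mathcal{A} \to \mathcal{B}$.
   Context: A notion of guarding $\mathfrak{g}$ is atom, loose, or clique guarding; a subset of a $\sigma$-structure is $\mathfrak{g}$-guarded if contained in the support of a tuple satisfying a $\mathfrak{g}$-guard. $\mathbb{G}^{\mathfrak{g}}\mathcal{A}$ is the $\sigma$-structure whose universe consists of equivalence classes $[p,a]$ of focussed plays $\langle p,a\rangle$, where $p=[U_1,\ldots,U_n]$ is a non-empty list of $\mathfrak{g}$-guarded sets of $\mathcal{A}$ and $a \in U_n = \lambda(p)$; $\langle p,a\rangle \sim \langle q,a'\rangle$ iff $a=a'$, the greatest common prefix $p\sqcap q$ is non-empty, and $a$ lies in the last element of every play on the prefix-order paths from $p \sqcap q$ to $p$ and to $q$. Relations: $R^{\mathbb{G}\mathcal{A}} = \{([p,a_1],\ldots,[p,a_r]) \mid R^{\mathcal{A}}(a_1,\ldots,a_r)\}$. The $\mathfrak{g}$-guarded simulation game from $\mathcal{A}$ to $\mathcal{B}$: set $X_0 = \varnothing$, $\varphi_0 = \varnothing$;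 in round $n+1$ Spoiler picks a $\mathfrak{g}$-guarded set $X_{n+1}$ in $\mathcal{A}$, and Duplicator must respond with a $\mathfrak{g}$-guarded set $Y_{n+1}$ in $\mathcal{B}$ and a partial homomorphism $\varphi_{n+1} : X_{n+1} \to Y_{n+1}$ agreeing with $\varphi_n$ on $X_{n+1}\cap X_n$. Duplicator wins if he can always respond. $\mathcal{A} \preceq^{\mathfrak{g}} \mathcal{B}$ means Duplicator has a winning strategy. *)

theory Defs
  imports Main "HOL-Library.Sublist" "HOL-Library.FuncSet"
begin

record ('r, 'a) struc =
  univ :: "'a set"
  rel  :: "'r \<Rightarrow> 'a list set"

definition wf_struc :: "('r \<Rightarrow> nat) \<Rightarrow> ('r, 'a) struc \<Rightarrow> bool" where
  "wf_struc ar A \<longleftrightarrow>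
     (\<forall>R. \<forall>as \<in> rel A R. length as = ar R \<and> set as \<subseteq> univ A)"

datatype guarding = Atom | Loose | Clique

(* X is g-guarded iff X is contained in the support of a tuple satisfying a g-guard.
   Atom guards: R(x) or x = x.
   Loose guards: conjunctions of atoms in which every two variables co-occur in a conjunct
     (supports: finite nonempty sets in which every two distinct elements co-occur in a
      relation tuple lying inside the set).
   Clique guards: exists z. (conjunction of atoms) with every two of the free variables
     co-occurring in a conjunct (supports: finite nonempty cliques of the Gaifman graph).
   The first disjunct covers relation tuples (including nullary ones). *)
definition guarded :: "guarding \<Rightarrow> ('r, 'a) struc \<Rightarrow> 'a set \<Rightarrow> bool" where
  "guarded g A X \<longleftrightarrow>
     (\<exists>R. \<exists>as \<in> rel A R. X \<subseteq> set as) \<or>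
     (\<exists>Y. X \<subseteq> Y \<and> Y \<noteq> {} \<and> finite Y \<and> Y \<subseteq> univ A \<and>
        (case g of
           Atom \<Rightarrow> (\<forall>a\<in>Y. \<forall>b\<in>Y. a = b)
         | Loose \<Rightarrow> (\<forall>a\<in>Y. \<forall>b\<in>Y. a \<noteq> b \<longrightarrow>
                      (\<exists>R. \<exists>as \<in> rel A R. set as \<subseteq> Y \<and> a \<in> set as \<and> b \<in> set as))
         | Clique \<Rightarrow> (\<forall>a\<in>Y. \<forall>b\<in>Y. a \<noteq> b \<longrightarrow>
                      (\<exists>R. \<exists>as \<in> rel A R. a \<in> set as \<and> b \<in> set as))))"

definition play :: "guarding \<Rightarrow> ('r, 'a) struc \<Rightarrow> 'a set list \<Rightarrow> bool" where
  "play g A p \<longleftrightarrow> p \<noteq> [] \<and> (\<forall>U \<in> set p. guarded g A U)"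

definition fplays :: "guarding \<Rightarrow> ('r, 'a) struc \<Rightarrow> ('a set list \<times> 'a) set" where
  "fplays g A = {(p, a). play g A p \<and> a \<in> last p}"

definition gequiv :: "guarding \<Rightarrow> ('r, 'a) struc \<Rightarrow> (('a set list \<times> 'a) \<times> ('a set list \<times> 'a)) set" where
  "gequiv g A = {((p, a), (q, a')). (p, a) \<in> fplays g A \<and> (q, a') \<in> fplays g A \<and> a = a' \<and>
      longest_common_prefix p q \<noteq> [] \<and>
      (\<forall>r. prefix (longest_common_prefix p q) r \<and> prefix r p \<longrightarrow> a \<in> last r) \<and>
      (\<forall>r. prefix (longest_common_prefix p q) r \<and> prefix r q \<longrightarrow> a \<in> last r)}"

definition gclass :: "guarding \<Rightarrow> ('r, 'a) struc \<Rightarrow> 'a set list \<Rightarrow> 'a \<Rightarrow> ('a set list \<times> 'a) set" where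
  "gclass g A p a = gequiv g A `` {(p, a)}"

definition GG :: "guarding \<Rightarrow> ('r, 'a) struc \<Rightarrow> ('r, ('a set list \<times> 'a) set) struc" where
  "GG g A = \<lparr> univ = fplays g A // gequiv g A,
              rel = (\<lambda>R. {map (gclass g A p) as | p as.
                             play g A p \<and> as \<in> rel A R \<and> set as \<subseteq> last p}) \<rparr>"

definition hom :: "('r, 'a) struc \<Rightarrow> ('r, 'b) struc \<Rightarrow> ('a \<Rightarrow> 'b) \<Rightarrow> bool" where
  "hom A B h \<longleftrightarrow> h ` univ A \<subseteq> univ B \<and> (\<forall>R. \<forall>as \<in> rel A R. map h as \<in> rel B R)"

definition partial_hom :: "('r, 'a) struc \<Rightarrow> ('r, 'b) struc \<Rightarrow> 'a set \<Rightarrow> 'b set \<Rightarrow> ('a \<Rightarrow> 'b) \<Rightarrow> bool" where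
  "partial_hom A B X Y f \<longleftrightarrow> f ` X \<subseteq> Y \<and>
     (\<forall>R. \<forall>as \<in> rel A R. set as \<subseteq> X \<longrightarrow> map f as \<in> rel B R)"

(* A Duplicator strategy maps the sequence p = [X_1,...,X_n] of Spoiler moves to the
   partial map phi_n : X_n -> B (values outside X_n, or for non-plays, are undefined).
   It is winning iff every response is legal: phi_n is a partial homomorphism into some
   g-guarded Y_n of B, agreeing with phi_{n-1} on X_n \<inter> X_{n-1} (X_0 = {} so no constraint at n = 1). *)
definition win_strat :: "guarding \<Rightarrow> ('r, 'a) struc \<Rightarrow> ('r, 'b) struc \<Rightarrow> ('a set list \<Rightarrow> 'a \<Rightarrow> 'b) \<Rightarrow> bool" where
  "win_strat g A B s \<longleftrightarrow>
     (\<forall>p a. (p, a) \<notin> fplays g A \<longrightarrow> s p a = undefined) \<and>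
     (\<forall>p. play g A p \<longrightarrow>
        (\<exists>Y. guarded g B Y \<and> partial_hom A B (last p) Y (s p)) \<and>
        (\<forall>q X. p = q @ [X] \<and> q \<noteq> [] \<longrightarrow> (\<forall>a \<in> X \<inter> last q. s p a = s q a)))"

definition guarded_sim :: "guarding \<Rightarrow> ('r, 'a) struc \<Rightarrow> ('r, 'b) struc \<Rightarrow> bool" where
  "guarded_sim g A B \<longleftrightarrow> (\<exists>s. win_strat g A B s)"

end

theory Submission
  imports Defs
begin

definition goodp :: "'a set list \<Rightarrow> 'a set list \<Rightarrow> 'a \<Rightarrow> bool" where
  "goodp c p a \<longleftrightarrow> (\<forall>r. prefix c r \<and> prefix r p \<longrightarrow> a \<in> last r)"

lemma gequiv_alt:
  "((p, a), (q, b)) \<in> gequiv g A \<longleftrightarrow>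
     (p, a) \<in> fplays g A \<and> (q, b) \<in> fplays g A \<and> a = b \<and>
     (\<exists>c. c \<noteq> [] \<and> prefix c p \<and> prefix c q \<and> goodp c p a \<and> goodp c q a)"
proof
  assume "((p, a), (q, b)) \<in> gequiv g A"
  then show "(p, a) \<in> fplays g A \<and> (q, b) \<in> fplays g A \<and> a = b \<and>
     (\<exists>c. c \<noteq> [] \<and> prefix c p \<and> prefix c q \<and> goodp c p a \<and> goodp c q a)"
  proof -
    let ?l = "longest_common_prefix p q"
    have d: "(p, a) \<in> fplays g A" "(q, b) \<in> fplays g A" "a = b" "?l \<noteq> []"
      "\<forall>r. prefix ?l r \<and> prefix r p \<longrightarrow> a \<in> last r"
      "\<forall>r. prefix ?l r \<and> prefix r q \<longrightarrow> a \<in> last r"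
      using \<open>((p, a), (q, b)) \<in> gequiv g A\<close> unfolding gequiv_def by auto
    have "goodp ?l p a" "goodp ?l q a" using d(5,6) unfolding goodp_def by blast+
    then show ?thesis using d(1-4) longest_common_prefix_prefix1[of p q]
      longest_common_prefix_prefix2[of p q] by blast
  qed
next
  assume "(p, a) \<in> fplays g A \<and> (q, b) \<in> fplays g A \<and> a = b \<and>
     (\<exists>c. c \<noteq> [] \<and> prefix c p \<and> prefix c q \<and> goodp c p a \<and> goodp c q a)"
  then obtain c where h: "(p, a) \<in> fplays g A" "(q, b) \<in> fplays g A" "a = b" "c \<noteq> []"
    "prefix c p" "prefix c q" "goodp c p a" "goodp c q a" by blast
  let ?l = "longest_common_prefix p q"
  have cl: "prefix c ?l" using h longest_common_prefix_max_prefix by blast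
  have "?l \<noteq> []" using cl h(4) by auto
  moreover have "\<forall>r. prefix ?l r \<and> prefix r p \<longrightarrow> a \<in> last r"
    using h(7) cl unfolding goodp_def using prefix_order.order_trans by blast
  moreover have "\<forall>r. prefix ?l r \<and> prefix r q \<longrightarrow> a \<in> last r"
    using h(8) cl unfolding goodp_def using prefix_order.order_trans by blast
  ultimately show "((p, a), (q, b)) \<in> gequiv g A" using h unfolding gequiv_def by auto
qed

lemma gequiv_equiv: "equiv (fplays g A) (gequiv g A)"
proof (rule equivI)
  show "gequiv g A \<subseteq> fplays g A \<times> fplays g A" unfolding gequiv_def by auto
next
  show "refl_on (fplays g A) (gequiv g A)"
  proof (rule refl_onI)
    fix x assume x: "x \<in> fplays g A"
    obtain p a where xe: "x = (p, a)" by force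
    have "p \<noteq> []" "a \<in> last p" using x xe unfolding fplays_def play_def by auto
    then have "goodp p p a" unfolding goodp_def using prefix_order.antisym by blast
    then show "(x, x) \<in> gequiv g A" using x xe \<open>p \<noteq> []\<close> by (auto simp: gequiv_alt)
  qed
next
  show "sym (gequiv g A)"
    by (rule symI) (auto simp: gequiv_alt)
next
  show "trans (gequiv g A)"
  proof (rule transI)
    fix x y z assume xy: "(x, y) \<in> gequiv g A" and yz: "(y, z) \<in> gequiv g A"
    obtain p a where xe: "x = (p, a)" by force
    obtain q b where ye: "y = (q, b)" by force
    obtain r d where ze: "z = (r, d)" by force
    from xy obtain c1 where c1: "(p, a) \<in> fplays g A" "a = b" "c1 \<noteq> []" "prefix c1 p" "prefix c1 q"
      "goodp c1 p a" "goodp c1 q a"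
      using xe ye by (auto simp: gequiv_alt)
    from yz obtain c2 where c2: "(r, d) \<in> fplays g A" "b = d" "c2 \<noteq> []" "prefix c2 q" "prefix c2 r"
      "goodp c2 q b" "goodp c2 r b"
      using ze ye by (auto simp: gequiv_alt)
    have "prefix c1 c2 \<or> prefix c2 c1" using c1(5) c2(4) prefix_same_cases by blast
    then have "\<exists>c. c \<noteq> [] \<and> prefix c p \<and> prefix c r \<and> goodp c p a \<and> goodp c r a"
    proof
      assume cc: "prefix c1 c2"
      have "goodp c1 r a"
        unfolding goodp_def
      proof (intro allI impI)
        fix t assume t: "prefix c1 t \<and> prefix t r"
        have "prefix t c2 \<or> prefix c2 t" using t c2(5) prefix_same_cases by blast
        then show "a \<in> last t"
        proof
          assume "prefix t c2"
          then have "prefix t q" using c2(4) prefix_order.order_trans by blast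
          then show ?thesis using c1(7) t unfolding goodp_def by blast
        next
          assume "prefix c2 t"
          then show ?thesis using c2(7) t c1(2) c2(2) unfolding goodp_def by blast
        qed
      qed
      moreover have "prefix c1 r" using cc c2(5) prefix_order.order_trans by blast
      ultimately show ?thesis using c1 by blast
    next
      assume cc: "prefix c2 c1"
      have "goodp c2 p a"
        unfolding goodp_def
      proof (intro allI impI)
        fix t assume t: "prefix c2 t \<and> prefix t p"
        have "prefix t c1 \<or> prefix c1 t" using t c1(4) prefix_same_cases by blast
        then show "a \<in> last t"
        proof
          assume "prefix t c1"
          then have "prefix t q" using c1(5) prefix_order.order_trans by blast
          then show ?thesis using c2(6) t c1(2) unfolding goodp_def by blast
        next
          assume "prefix c1 t"
          then show ?thesis using c1(6) t unfolding goodp_def by blast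
        qed
      qed
      moreover have "prefix c2 p" using cc c1(4) prefix_order.order_trans by blast
      ultimately show ?thesis using c2 c1(2) by blast
    qed
    then show "(x, z) \<in> gequiv g A" using xe ze c1 c2 by (auto simp: gequiv_alt)
  qed
qed

lemma gclass_eq_iff:
  assumes "(p, a) \<in> fplays g A" "(q, b) \<in> fplays g A"
  shows "gclass g A p a = gclass g A q b \<longleftrightarrow> ((p, a), (q, b)) \<in> gequiv g A"
  unfolding gclass_def by (rule eq_equiv_class_iff[OF gequiv_equiv assms])

lemma univ_GG: "univ (GG g A) = fplays g A // gequiv g A"
  unfolding GG_def by simp

lemma gclass_in_univ:
  assumes "(p, a) \<in> fplays g A"
  shows "gclass g A p a \<in> univ (GG g A)"
  unfolding univ_GG gclass_def by (rule quotientI[OF assms])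

lemma univ_GG_cases:
  assumes "C \<in> univ (GG g A)"
  obtains p a where "(p, a) \<in> fplays g A" "C = gclass g A p a"
proof -
  have "C \<in> fplays g A // gequiv g A" using assms unfolding univ_GG .
  then obtain x where x: "C = gequiv g A `` {x}" "x \<in> fplays g A" by (rule quotientE)
  obtain p a where xe: "x = (p, a)" by (cases x)
  show ?thesis
  proof (rule that)
    show "(p, a) \<in> fplays g A" using x(2) xe by simp
    show "C = gclass g A p a" unfolding gclass_def using x(1) xe by simp
  qed
qed

lemma fplays_snoc:
  assumes "(q, a) \<in> fplays g A" "play g A (q @ [X])" "a \<in> X"
  shows "gclass g A (q @ [X]) a = gclass g A q a"
proof -
  have f2: "(q @ [X], a) \<in> fplays g A" using assms unfolding fplays_def by simp
  have q: "q \<noteq> []" "a \<in> last q" using assms(1) unfolding fplays_def play_def by simp_all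
  have "goodp q (q @ [X]) a" unfolding goodp_def
  proof (intro allI impI)
    fix r assume r: "prefix q r \<and> prefix r (q @ [X])"
    then have "r = q @ [X] \<or> prefix r q" by simp
    then show "a \<in> last r"
    proof
      assume "r = q @ [X]" then show ?thesis using assms(3) by simp
    next
      assume "prefix r q" then have "r = q" using r prefix_order.antisym by blast
      then show ?thesis using q(2) by simp
    qed
  qed
  moreover have "goodp q q a" unfolding goodp_def
  proof (intro allI impI)
    fix r assume r: "prefix q r \<and> prefix r q"
    then have "r = q" using prefix_order.antisym by blast
    then show "a \<in> last r" using q(2) by simp
  qed
  moreover have "prefix q (q @ [X])" by simp
  moreover have "prefix q q" by simp
  ultimately have "\<exists>c. c \<noteq> [] \<and> prefix c (q @ [X]) \<and> prefix c q \<and> goodp c (q @ [X]) a \<and> goodp c q a"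
    using q(1) by blast
  then have "((q @ [X], a), (q, a)) \<in> gequiv g A"
    unfolding gequiv_alt using f2 assms(1) by simp
  then show ?thesis using gclass_eq_iff[OF f2 assms(1)] by simp
qed

lemma play_butlast:
  assumes "play g A (q @ [X])" "q \<noteq> []"
  shows "play g A q"
  using assms unfolding play_def by auto

lemma strat_chain:
  assumes ws: "win_strat g A B s" and "(p, a) \<in> fplays g A" "c \<noteq> []" "prefix c p" "goodp c p a"
  shows "s p a = s c a"
  using assms(2-5)
proof (induction p rule: rev_induct)
  case Nil
  then show ?case by simp
next
  case (snoc X p0)
  show ?case
  proof (cases "c = p0 @ [X]")
    case True
    then show ?thesis by simp
  next
    case False
    then have cp: "prefix c p0" using snoc.prems by simp
    have p0ne: "p0 \<noteq> []" using cp snoc.prems(2) by auto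
    have g0: "goodp c p0 a" using snoc.prems(4) unfolding goodp_def by auto
    have al: "a \<in> last p0" using g0 cp unfolding goodp_def by blast
    have aX: "a \<in> X" using snoc.prems(1) unfolding fplays_def by simp
    have pl: "play g A (p0 @ [X])" using snoc.prems(1) unfolding fplays_def by simp
    have pl0: "play g A p0" using play_butlast[OF pl p0ne] .
    have f0: "(p0, a) \<in> fplays g A" using pl0 al unfolding fplays_def by simp
    have "s (p0 @ [X]) a = s p0 a" using ws pl p0ne aX al unfolding win_strat_def by blast
    also have "\<dots> = s c a" using snoc.IH[OF f0 snoc.prems(2) cp g0] .
    finally show ?thesis .
  qed
qed

lemma strat_welldef:
  assumes ws: "win_strat g A B s" and f1: "(p, a) \<in> fplays g A" and f2: "(q, b) \<in> fplays g A"
    and eq: "gclass g A p a = gclass g A q b"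
  shows "s p a = s q b"
proof -
  have "((p, a), (q, b)) \<in> gequiv g A" using gclass_eq_iff[OF f1 f2] eq by blast
  then obtain c where c: "a = b" "c \<noteq> []" "prefix c p" "prefix c q" "goodp c p a" "goodp c q a"
    by (auto simp: gequiv_alt)
  have "s p a = s c a" using strat_chain[OF ws f1 c(2,3,5)] .
  moreover have "s q b = s c a" using strat_chain[OF ws f2 c(2,4)] c(1,6) by simp
  ultimately show ?thesis by simp
qed

lemma guarded_univ:
  assumes "wf_struc ar B" "guarded g B Y"
  shows "Y \<subseteq> univ B"
  using assms unfolding wf_struc_def guarded_def by blast

definition Phi :: "guarding \<Rightarrow> ('r, 'a) struc \<Rightarrow> (('a set list \<times> 'a) set \<Rightarrow> 'b) \<Rightarrow> 'a set list \<Rightarrow> 'a \<Rightarrow> 'b" where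
  "Phi g A h = (\<lambda>p a. if (p, a) \<in> fplays g A then h (gclass g A p a) else undefined)"

lemma GG_rel_in:
  assumes "play g A p" "as \<in> rel A R" "set as \<subseteq> last p"
  shows "map (gclass g A p) as \<in> rel (GG g A) R"
  using assms unfolding GG_def by auto

lemma GG_rel_E:
  assumes "t \<in> rel (GG g A) R"
  obtains p as where "t = map (gclass g A p) as" "play g A p" "as \<in> rel A R" "set as \<subseteq> last p"
proof -
  have "t \<in> {map (gclass g A p) as | p as. play g A p \<and> as \<in> rel A R \<and> set as \<subseteq> last p}"
    using assms unfolding GG_def by simp
  then show ?thesis using that by blast
qed

lemma hom_to_strat:
  assumes hh: "hom (GG g A) B h"
  shows "win_strat g A B (Phi g A h)"
  unfolding win_strat_def
proof (intro conjI allI impI)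
  fix p a assume "(p, a) \<notin> fplays g A"
  then show "Phi g A h p a = undefined" unfolding Phi_def by simp
next
  fix p assume pl: "play g A p"
  have pne: "p \<noteq> []" using pl unfolding play_def by simp
  let ?f = "Phi g A h p"
  have fv: "?f a = h (gclass g A p a)" if "a \<in> last p" for a
    using that pl unfolding Phi_def fplays_def by simp
  have hrel: "map h t \<in> rel B R" if "t \<in> rel (GG g A) R" for t R
    using hh that unfolding hom_def by blast
  have huniv: "h C \<in> univ B" if "C \<in> univ (GG g A)" for C
    using hh that unfolding hom_def by blast
  have gl: "guarded g A (last p)" using pl pne unfolding play_def by simp
  have "\<exists>Y. guarded g B Y \<and> ?f ` last p \<subseteq> Y"
  proof -
    from gl show ?thesis unfolding guarded_def[of g A]
    proof (elim disjE exE conjE bexE)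
      fix R as assume asr: "as \<in> rel A R" and sub: "last p \<subseteq> set as"
      let ?q = "p @ [set as]"
      have "guarded g A (set as)" unfolding guarded_def using asr by blast
      then have plq: "play g A ?q" using pl unfolding play_def by simp
      have eqc: "gclass g A ?q a = gclass g A p a" if "a \<in> last p" for a
        using fplays_snoc[of p a g A "set as"] plq that sub pl unfolding fplays_def by auto
      let ?t = "map h (map (gclass g A ?q) as)"
      have "?t \<in> rel B R" by (rule hrel[OF GG_rel_in[OF plq asr, simplified]])
      then have "guarded g B (set ?t)" unfolding guarded_def by blast
      moreover have "?f ` last p \<subseteq> set ?t"
      proof
        fix y assume "y \<in> ?f ` last p"
        then obtain a where a: "a \<in> last p" "y = ?f a" by blast
        then have "y = h (gclass g A ?q a)" using fv eqc by simp
        then show "y \<in> set ?t" using a(1) sub by auto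
      qed
      ultimately show ?thesis by blast
    next
      fix Y' assume sub: "last p \<subseteq> Y'" and ne: "Y' \<noteq> {}" and fin: "finite Y'"
        and uA: "Y' \<subseteq> univ A"
        and cs: "case g of
           Atom \<Rightarrow> (\<forall>a\<in>Y'. \<forall>b\<in>Y'. a = b)
         | Loose \<Rightarrow> (\<forall>a\<in>Y'. \<forall>b\<in>Y'. a \<noteq> b \<longrightarrow>
                      (\<exists>R. \<exists>as \<in> rel A R. set as \<subseteq> Y' \<and> a \<in> set as \<and> b \<in> set as))
         | Clique \<Rightarrow> (\<forall>a\<in>Y'. \<forall>b\<in>Y'. a \<noteq> b \<longrightarrow>
                      (\<exists>R. \<exists>as \<in> rel A R. a \<in> set as \<and> b \<in> set as))"
      let ?q = "p @ [Y']"
      have gY: "guarded g A Y'" unfolding guarded_def using sub ne fin uA cs by blast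
      have plq: "play g A ?q" using pl gY unfolding play_def by auto
      have fq: "(?q, a) \<in> fplays g A" if "a \<in> Y'" for a using plq that unfolding fplays_def by simp
      have eqc: "gclass g A ?q a = gclass g A p a" if "a \<in> last p" for a
        using fplays_snoc[of p a g A Y'] plq that sub pl unfolding fplays_def by auto
      let ?k = "\<lambda>a. h (gclass g A ?q a)"
      let ?Z = "?k ` Y'"
      have Zsub: "?f ` last p \<subseteq> ?Z"
      proof
        fix y assume "y \<in> ?f ` last p"
        then obtain a where a: "a \<in> last p" "y = ?f a" by blast
        then have "y = ?k a" using fv eqc by simp
        then show "y \<in> ?Z" using a(1) sub by auto
      qed
      have Zne: "?Z \<noteq> {}" "finite ?Z" using ne fin by auto
      have Zu: "?Z \<subseteq> univ B" by (auto intro!: huniv gclass_in_univ fq)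
      have "case g of
           Atom \<Rightarrow> (\<forall>a\<in>?Z. \<forall>b\<in>?Z. a = b)
         | Loose \<Rightarrow> (\<forall>a\<in>?Z. \<forall>b\<in>?Z. a \<noteq> b \<longrightarrow>
                      (\<exists>R. \<exists>as \<in> rel B R. set as \<subseteq> ?Z \<and> a \<in> set as \<and> b \<in> set as))
         | Clique \<Rightarrow> (\<forall>a\<in>?Z. \<forall>b\<in>?Z. a \<noteq> b \<longrightarrow>
                      (\<exists>R. \<exists>as \<in> rel B R. a \<in> set as \<and> b \<in> set as))"
      proof (cases g)
        case Atom
        then show ?thesis using cs by auto
      next
        case Loose
        have "\<exists>R. \<exists>bs \<in> rel B R. set bs \<subseteq> ?Z \<and> ?k a1 \<in> set bs \<and> ?k a2 \<in> set bs"
          if aa: "a1 \<in> Y'" "a2 \<in> Y'" "?k a1 \<noteq> ?k a2" for a1 a2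
        proof -
          have "a1 \<noteq> a2" using aa by auto
          then obtain R as where as: "as \<in> rel A R" "set as \<subseteq> Y'" "a1 \<in> set as" "a2 \<in> set as"
            using cs Loose aa by (simp, blast)
          have "map h (map (gclass g A ?q) as) \<in> rel B R"
            using hrel[OF GG_rel_in[OF plq as(1)]] as(2) by simp
          then have m: "map ?k as \<in> rel B R" by (simp add: comp_def)
          have "set (map ?k as) \<subseteq> ?Z" using as(2) by auto
          moreover have "?k a1 \<in> set (map ?k as)" "?k a2 \<in> set (map ?k as)" using as(3,4) by auto
          ultimately show ?thesis using m by blast
        qed
        then show ?thesis using Loose by auto
      next
        case Clique
        have "\<exists>R. \<exists>bs \<in> rel B R. ?k a1 \<in> set bs \<and> ?k a2 \<in> set bs"
          if aa: "a1 \<in> Y'" "a2 \<in> Y'" "?k a1 \<noteq> ?k a2" for a1 a2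
        proof -
          have "a1 \<noteq> a2" using aa by auto
          then obtain R as where as: "as \<in> rel A R" "a1 \<in> set as" "a2 \<in> set as"
            using cs Clique aa by (simp, blast)
          let ?q' = "?q @ [set as]"
          have "guarded g A (set as)" unfolding guarded_def using as(1) by blast
          then have plq': "play g A ?q'" using plq unfolding play_def by simp
          have e1: "gclass g A ?q' a1 = gclass g A ?q a1"
            using fplays_snoc[OF fq[OF aa(1)] plq' as(2)] .
          have e2: "gclass g A ?q' a2 = gclass g A ?q a2"
            using fplays_snoc[OF fq[OF aa(2)] plq' as(3)] .
          have "map h (map (gclass g A ?q') as) \<in> rel B R"
            using hrel[OF GG_rel_in[OF plq' as(1)]] by simp
          moreover have "?k a1 \<in> set (map h (map (gclass g A ?q') as))"
            unfolding e1[symmetric] using as(2) by simp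
          moreover have "?k a2 \<in> set (map h (map (gclass g A ?q') as))"
            unfolding e2[symmetric] using as(3) by simp
          ultimately show ?thesis by blast
        qed
        then show ?thesis using Clique by auto
      qed
      then have "guarded g B ?Z" unfolding guarded_def using Zne Zu by blast
      then show ?thesis using Zsub by blast
    qed
  qed
  then obtain Y where Y: "guarded g B Y" "?f ` last p \<subseteq> Y" by blast
  have "\<forall>R. \<forall>as \<in> rel A R. set as \<subseteq> last p \<longrightarrow> map ?f as \<in> rel B R"
  proof (intro allI ballI impI)
    fix R as assume as: "as \<in> rel A R" "set as \<subseteq> last p"
    have eq: "map ?f as = map h (map (gclass g A p) as)" using fv as(2) by auto
    show "map ?f as \<in> rel B R" unfolding eq by (rule hrel[OF GG_rel_in[OF pl as]])
  qed
  then show "\<exists>Y. guarded g B Y \<and> partial_hom A B (last p) Y ?f"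
    using Y unfolding partial_hom_def by blast
next
  fix p q X assume pl: "play g A p" and pq: "p = q @ [X] \<and> q \<noteq> []"
  show "\<forall>a \<in> X \<inter> last q. Phi g A h p a = Phi g A h q a"
  proof
    fix a assume a: "a \<in> X \<inter> last q"
    have plq: "play g A q" using play_butlast pl pq by blast
    have fq: "(q, a) \<in> fplays g A" using plq a unfolding fplays_def by simp
    have fp: "(p, a) \<in> fplays g A" using pl a pq unfolding fplays_def by simp
    have "gclass g A p a = gclass g A q a" using fplays_snoc[OF fq] pl pq a by auto
    then show "Phi g A h p a = Phi g A h q a" using fq fp unfolding Phi_def by simp
  qed
qed


definition Hs :: "guarding \<Rightarrow> ('r, 'a) struc \<Rightarrow> ('a set list \<Rightarrow> 'a \<Rightarrow> 'b) \<Rightarrow> ('a set list \<times> 'a) set \<Rightarrow> 'b" where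
  "Hs g A s = (\<lambda>C. if C \<in> univ (GG g A)
      then (SOME b. \<exists>p a. (p, a) \<in> fplays g A \<and> C = gclass g A p a \<and> b = s p a) else undefined)"

lemma Hs_eq:
  assumes ws: "win_strat g A B s" and f: "(p, a) \<in> fplays g A"
  shows "Hs g A s (gclass g A p a) = s p a"
proof -
  have "(SOME b. \<exists>q c. (q, c) \<in> fplays g A \<and> gclass g A p a = gclass g A q c \<and> b = s q c) = s p a"
  proof (rule some_equality)
    show "\<exists>q c. (q, c) \<in> fplays g A \<and> gclass g A p a = gclass g A q c \<and> s p a = s q c"
      using f by blast
  next
    fix b assume "\<exists>q c. (q, c) \<in> fplays g A \<and> gclass g A p a = gclass g A q c \<and> b = s q c"
    then obtain q c where "(q, c) \<in> fplays g A" "gclass g A p a = gclass g A q c" "b = s q c" by blast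
    then show "b = s p a" using strat_welldef[OF ws f] by simp
  qed
  then show ?thesis unfolding Hs_def using gclass_in_univ[OF f] by simp
qed

lemma strat_to_hom:
  assumes wfB: "wf_struc ar B" and ws: "win_strat g A B s"
  shows "hom (GG g A) B (Hs g A s)" "Hs g A s \<in> extensional (univ (GG g A))"
    "Phi g A (Hs g A s) = s"
proof -
  have pw: "\<exists>Y. guarded g B Y \<and> partial_hom A B (last p) Y (s p)" if "play g A p" for p
    using ws that unfolding win_strat_def by blast
  have und: "s p a = undefined" if "(p, a) \<notin> fplays g A" for p a
    using ws that unfolding win_strat_def by blast
  have "Hs g A s ` univ (GG g A) \<subseteq> univ B"
  proof
    fix y assume "y \<in> Hs g A s ` univ (GG g A)"
    then obtain C where C: "C \<in> univ (GG g A)" "y = Hs g A s C" by blast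
    obtain p a where pa: "(p, a) \<in> fplays g A" "C = gclass g A p a" using univ_GG_cases[OF C(1)] by blast
    have y: "y = s p a" using C pa Hs_eq[OF ws pa(1)] by simp
    have pl: "play g A p" "a \<in> last p" using pa unfolding fplays_def by auto
    obtain Y where Y: "guarded g B Y" "partial_hom A B (last p) Y (s p)" using pw[OF pl(1)] by blast
    have "s p a \<in> Y" using Y(2) pl(2) unfolding partial_hom_def by blast
    then show "y \<in> univ B" using y guarded_univ[OF wfB Y(1)] by blast
  qed
  moreover have "\<forall>R. \<forall>t \<in> rel (GG g A) R. map (Hs g A s) t \<in> rel B R"
  proof (intro allI ballI)
    fix R t assume "t \<in> rel (GG g A) R"
    then obtain p as where t: "t = map (gclass g A p) as" "play g A p" "as \<in> rel A R" "set as \<subseteq> last p"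
      by (rule GG_rel_E)
    have hx: "Hs g A s (gclass g A p x) = s p x" if "x \<in> set as" for x
    proof -
      have "(p, x) \<in> fplays g A" using t(2,4) that unfolding fplays_def by auto
      then show ?thesis by (rule Hs_eq[OF ws])
    qed
    have "map (Hs g A s) t = map (s p) as"
      unfolding t(1) by (simp add: hx)
    moreover obtain Y where Y: "guarded g B Y" "partial_hom A B (last p) Y (s p)" using pw[OF t(2)] by blast
    ultimately show "map (Hs g A s) t \<in> rel B R" using t(3,4) unfolding partial_hom_def by simp
  qed
  ultimately show "hom (GG g A) B (Hs g A s)" unfolding hom_def by blast
  show "Hs g A s \<in> extensional (univ (GG g A))" unfolding Hs_def extensional_def by simp
  show "Phi g A (Hs g A s) = s"
  proof (intro ext)
    fix p a show "Phi g A (Hs g A s) p a = s p a"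
    proof (cases "(p, a) \<in> fplays g A")
      case True
      then show ?thesis unfolding Phi_def using Hs_eq[OF ws True] by simp
    next
      case False
      then show ?thesis unfolding Phi_def using und[OF False] by simp
    qed
  qed
qed

lemma Phi_inj:
  assumes "h1 \<in> extensional (univ (GG g A))" "h2 \<in> extensional (univ (GG g A))"
    and "Phi g A h1 = Phi g A h2"
  shows "h1 = h2"
proof (rule ext)
  fix C show "h1 C = h2 C"
  proof (cases "C \<in> univ (GG g A)")
    case True
    then obtain p a where pa: "(p, a) \<in> fplays g A" "C = gclass g A p a" by (rule univ_GG_cases)
    have "Phi g A h1 p a = Phi g A h2 p a" using assms(3) by simp
    then have "h1 (gclass g A p a) = h2 (gclass g A p a)" using pa(1) unfolding Phi_def by simp
    then show ?thesis using pa(2) by simp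
  next
    case False
    then show ?thesis using assms(1,2) unfolding extensional_def by simp
  qed
qed

theorem theorem3p7:
  fixes g :: guarding and ar :: "'r \<Rightarrow> nat"
    and A :: "('r, 'a) struc" and B :: "('r, 'b) struc"
  assumes "wf_struc ar A" and "wf_struc ar B"
  shows "bij_betw (\<lambda>h p a. if (p, a) \<in> fplays g A then h (gclass g A p a) else undefined)
                  {h. h \<in> extensional (univ (GG g A)) \<and> hom (GG g A) B h}
                       {s. win_strat g A B s}
         \<and> (guarded_sim g A B \<longleftrightarrow> (\<exists>h. hom (GG g A) B h))"
proof -
  have F: "(\<lambda>h p a. if (p, a) \<in> fplays g A then h (gclass g A p a) else undefined) = Phi g A"
    unfolding Phi_def by (intro ext) simp
  have "bij_betw (Phi g A) {h. h \<in> extensional (univ (GG g A)) \<and> hom (GG g A) B h}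
                       {s. win_strat g A B s}"
    unfolding bij_betw_def
  proof
    show "inj_on (Phi g A) {h. h \<in> extensional (univ (GG g A)) \<and> hom (GG g A) B h}"
    proof (rule inj_onI)
      fix h1 h2 assume "h1 \<in> {h. h \<in> extensional (univ (GG g A)) \<and> hom (GG g A) B h}"
        "h2 \<in> {h. h \<in> extensional (univ (GG g A)) \<and> hom (GG g A) B h}" "Phi g A h1 = Phi g A h2"
      then show "h1 = h2" using Phi_inj[of h1 g A h2] by simp
    qed
  next
    show "Phi g A ` {h. h \<in> extensional (univ (GG g A)) \<and> hom (GG g A) B h} = {s. win_strat g A B s}"
    proof
      show "Phi g A ` {h. h \<in> extensional (univ (GG g A)) \<and> hom (GG g A) B h} \<subseteq> {s. win_strat g A B s}"
      proof
        fix s assume "s \<in> Phi g A ` {h. h \<in> extensional (univ (GG g A)) \<and> hom (GG g A) B h}"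
        then obtain h where "hom (GG g A) B h" "s = Phi g A h" by blast
        then show "s \<in> {s. win_strat g A B s}" using hom_to_strat by simp
      qed
    next
      show "{s. win_strat g A B s} \<subseteq> Phi g A ` {h. h \<in> extensional (univ (GG g A)) \<and> hom (GG g A) B h}"
      proof
        fix s assume "s \<in> {s. win_strat g A B s}"
        then have ws: "win_strat g A B s" by simp
        note st = strat_to_hom[OF assms(2) ws]
        show "s \<in> Phi g A ` {h. h \<in> extensional (univ (GG g A)) \<and> hom (GG g A) B h}"
        proof (rule image_eqI)
          show "s = Phi g A (Hs g A s)" using st(3) by simp
          show "Hs g A s \<in> {h. h \<in> extensional (univ (GG g A)) \<and> hom (GG g A) B h}"
            using st(1,2) by simp
        qed
      qed
    qed
  qed
  moreover have "guarded_sim g A B \<longleftrightarrow> (\<exists>h. hom (GG g A) B h)"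
  proof
    assume "guarded_sim g A B"
    then obtain s where ws: "win_strat g A B s" unfolding guarded_sim_def by blast
    show "\<exists>h. hom (GG g A) B h" using strat_to_hom(1)[OF assms(2) ws] by blast
  next
    assume "\<exists>h. hom (GG g A) B h"
    then obtain h where hh: "hom (GG g A) B h" by blast
    show "guarded_sim g A B" unfolding guarded_sim_def using hom_to_strat[OF hh] by blast
  qed
  ultimately show ?thesis unfolding F by (rule conjI)
qed

end
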